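(* Let $k$ be a field of characteristic $0$, $V$ a $k$-module, and $L=(\mathcal{L}ie(\mathcal{M}ag(V)),\circ,[\,,\,])$ the free PostLie algebra on $V$. The right $\mathcal U(L_{\{,\}})$-module $\mathcal{M}ag(V)$ is isomorphic to the free right $\mathcal U(L_{\{,\}})$-module generated by $V$: $$\mathcal{M}ag(V)\cong V\otimes\mathcal U(L_{\{,\}}).$$
   Context: A PostLie algebra is a $k$-module with operations $\circ$, $[\,,\,]$, $[\,,\,]$ a Lie bracket, satisfying $(x\circ y)\circ z-x\circ(y\circ z)-(x\circ z)\circ y+x\circ(z\circ y)=x\circ[y,z]$ and $[x,y]\circ z=[x\circ z,y]+[x,y\circ z]$. The free PostLie algebra on $V$ has underlying module $\mathcal{L}ie(\mathcal{M}ag(V))$, the free Lie algebra on the free magmatic algebra $\mathcal{M}ag(V)$, with $[\,,\,]$ the free Lie bracket; $\mathcal{M}ag(V)\subset L$ (weight-one part in the Lie direction) and on $\mathcal{M}ag(V)$ the operation $\circ$ is the free magmatic product. $L_{\{,\}}$ is the Lie algebra $(L,\{\,,\,\})$ with $\{x,y\}=x\circ y-y\circ x+[x,y]$; $L$ is a right $L_{\{,\}}$-module via $(x,y)\mapsto x\circ y$, extended to a right action $\star$ of the universal enveloping algebra $\mathcal U(L_{\{,\}})$ by $g\star(v_1\otimes\cdots\otimes v_n)=((g\circ v_1)\cdots)\circ v_n$. The submodule $\mathcal{M}ag(V)\subset L$ is stable under this action, hence is a right $\mathcal U(L_{\{,\}})$-module. *)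

theory Defs
  imports Main "HOL-Library.Poly_Mapping"
begin

text \<open>Free magma on a basis type 'x: planar binary trees with leaves in 'x.
  The k-vector space V is taken to be the free vector space on 'x (every vector
  space over a field has a basis).\<close>
datatype 'x mag = Leaf 'x | Node "'x mag" "'x mag"

definition sm :: "'k::semiring_0 \<Rightarrow> ('a \<Rightarrow>\<^sub>0 'k) \<Rightarrow> ('a \<Rightarrow>\<^sub>0 'k)" where
  "sm c p = Poly_Mapping.map (\<lambda>a. c * a) p"

text \<open>Concatenation product on the free associative algebra ('a list =>0 'k).
  With 'a = 'x mag this is the tensor algebra T(Mag(V)).\<close>
definition tmul :: "('a list \<Rightarrow>\<^sub>0 'k::semiring_0) \<Rightarrow> ('a list \<Rightarrow>\<^sub>0 'k) \<Rightarrow> ('a list \<Rightarrow>\<^sub>0 'k)" where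
  "tmul p q = (\<Sum>a\<in>Poly_Mapping.keys p. \<Sum>b\<in>Poly_Mapping.keys q. Poly_Mapping.single (a @ b) (Poly_Mapping.lookup p a * Poly_Mapping.lookup q b))"

definition comm :: "('a list \<Rightarrow>\<^sub>0 'k::ring) \<Rightarrow> ('a list \<Rightarrow>\<^sub>0 'k) \<Rightarrow> ('a list \<Rightarrow>\<^sub>0 'k)" where
  "comm p q = tmul p q - tmul q p"

text \<open>Mag(V) inside T(Mag(V)): the degree-one part (span of one-letter words).\<close>
definition magset :: "('x mag list \<Rightarrow>\<^sub>0 'k::zero) set" where
  "magset = {p. \<forall>w\<in>Poly_Mapping.keys p. length w = 1}"

text \<open>Lie(Mag(V)): the free Lie algebra on Mag(V), realised as the Lie subalgebra of
  T(Mag(V)) generated by Mag(V) (Lie polynomials), with bracket the commutator.\<close>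
inductive_set lieset :: "('x mag list \<Rightarrow>\<^sub>0 'k::field) set" where
  gen: "Poly_Mapping.single [t] c \<in> lieset"
| add: "a \<in> lieset \<Longrightarrow> b \<in> lieset \<Longrightarrow> a + b \<in> lieset"
| scal: "a \<in> lieset \<Longrightarrow> sm c a \<in> lieset"
| brk: "a \<in> lieset \<Longrightarrow> b \<in> lieset \<Longrightarrow> comm a b \<in> lieset"

definition free_postlie :: "(('x mag list \<Rightarrow>\<^sub>0 'k::field) \<Rightarrow> ('x mag list \<Rightarrow>\<^sub>0 'k) \<Rightarrow> ('x mag list \<Rightarrow>\<^sub>0 'k)) \<Rightarrow> bool" where
  "free_postlie circ \<longleftrightarrow>
     (\<forall>x\<in>lieset. \<forall>y\<in>lieset. circ x y \<in> lieset) \<and>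
     (\<forall>x\<in>lieset. \<forall>y\<in>lieset. \<forall>z\<in>lieset. \<forall>c.
         circ (x + y) z = circ x z + circ y z \<and>
         circ z (x + y) = circ z x + circ z y \<and>
         circ (sm c x) z = sm c (circ x z) \<and>
         circ z (sm c x) = sm c (circ z x)) \<and>
     (\<forall>x\<in>lieset. \<forall>y\<in>lieset. \<forall>z\<in>lieset.
         circ (circ x y) z - circ x (circ y z) - circ (circ x z) y + circ x (circ z y)
           = circ x (comm y z)) \<and>
     (\<forall>x\<in>lieset. \<forall>y\<in>lieset. \<forall>z\<in>lieset.
         circ (comm x y) z = comm (circ x z) y + comm x (circ y z)) \<and>
     (\<forall>s t. circ (Poly_Mapping.single [s] 1) (Poly_Mapping.single [t] 1)
              = Poly_Mapping.single [Node s t] 1)"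

definition pbr :: "('l \<Rightarrow> 'l \<Rightarrow> 'l) \<Rightarrow> ('l \<Rightarrow> 'l \<Rightarrow> 'l) \<Rightarrow> 'l \<Rightarrow> 'l \<Rightarrow> ('l::ab_group_add)" where
  "pbr circ br x y = circ x y - circ y x + br x y"

text \<open>Universal enveloping algebra U(L_{,}) = F / I, where F is the free associative
  k-algebra on the set L (finitely supported functions on words in L) and I is the
  two-sided ideal generated by linearity relations and xy - yx - {x,y}.
  I is spanned by the relations multiplied on both sides by words.\<close>
definition wordsL :: "(('x mag list \<Rightarrow>\<^sub>0 'k::field) list \<Rightarrow>\<^sub>0 'k) set" where
  "wordsL = {f. \<forall>w\<in>Poly_Mapping.keys f. set w \<subseteq> lieset}"

inductive_set uideal for circ :: "('x mag list \<Rightarrow>\<^sub>0 'k::field) \<Rightarrow> ('x mag list \<Rightarrow>\<^sub>0 'k) \<Rightarrow> ('x mag list \<Rightarrow>\<^sub>0 'k)" where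
  lin_add: "set a \<subseteq> lieset \<Longrightarrow> set b \<subseteq> lieset \<Longrightarrow> l1 \<in> lieset \<Longrightarrow> l2 \<in> lieset \<Longrightarrow>
     Poly_Mapping.single (a @ [l1 + l2] @ b) 1 - Poly_Mapping.single (a @ [l1] @ b) 1
       - Poly_Mapping.single (a @ [l2] @ b) 1 \<in> uideal circ"
| lin_sm: "set a \<subseteq> lieset \<Longrightarrow> set b \<subseteq> lieset \<Longrightarrow> l \<in> lieset \<Longrightarrow>
     Poly_Mapping.single (a @ [sm c l] @ b) 1 - Poly_Mapping.single (a @ [l] @ b) c \<in> uideal circ"
| lie_rel: "set a \<subseteq> lieset \<Longrightarrow> set b \<subseteq> lieset \<Longrightarrow> l1 \<in> lieset \<Longrightarrow> l2 \<in> lieset \<Longrightarrow>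
     Poly_Mapping.single (a @ [l1, l2] @ b) 1 - Poly_Mapping.single (a @ [l2, l1] @ b) 1
       - Poly_Mapping.single (a @ [pbr circ comm l1 l2] @ b) 1 \<in> uideal circ"
| zero: "0 \<in> uideal circ"
| add: "p \<in> uideal circ \<Longrightarrow> q \<in> uideal circ \<Longrightarrow> p + q \<in> uideal circ"
| scal: "p \<in> uideal circ \<Longrightarrow> sm c p \<in> uideal circ"

definition actF :: "(('a \<Rightarrow>\<^sub>0 'k::semiring_0) \<Rightarrow> ('a \<Rightarrow>\<^sub>0 'k) \<Rightarrow> ('a \<Rightarrow>\<^sub>0 'k)) \<Rightarrow> ('a \<Rightarrow>\<^sub>0 'k) \<Rightarrow> (('a \<Rightarrow>\<^sub>0 'k) list \<Rightarrow>\<^sub>0 'k) \<Rightarrow> ('a \<Rightarrow>\<^sub>0 'k)" where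
  "actF circ g f = (\<Sum>w\<in>Poly_Mapping.keys f. sm (Poly_Mapping.lookup f w) (foldl circ g w))"

text \<open>The canonical map V \<otimes> F \<rightarrow> Mag(V), (u_x)_x \<mapsto> \<Sum>_x x \<star> u_x, where an element of
  V \<otimes> F is a finitely supported family indexed by the basis 'x of V.\<close>
definition canmap :: "(('x mag list \<Rightarrow>\<^sub>0 'k::field) \<Rightarrow> ('x mag list \<Rightarrow>\<^sub>0 'k) \<Rightarrow> ('x mag list \<Rightarrow>\<^sub>0 'k))
    \<Rightarrow> ('x \<Rightarrow>\<^sub>0 (('x mag list \<Rightarrow>\<^sub>0 'k) list \<Rightarrow>\<^sub>0 'k)) \<Rightarrow> ('x mag list \<Rightarrow>\<^sub>0 'k)" where
  "canmap circ u = (\<Sum>x\<in>Poly_Mapping.keys u. actF circ (Poly_Mapping.single [Leaf x] 1) (Poly_Mapping.lookup u x))"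

end

theory Submission
  imports Defs
begin



lemma lookup_map_gen: "Poly_Mapping.lookup (Poly_Mapping.map f p) k = (if Poly_Mapping.lookup p k = 0 then 0 else f (Poly_Mapping.lookup p k))"
  by (simp add: Poly_Mapping.map.rep_eq when_def)

lemma lookup_sm [simp]: "Poly_Mapping.lookup (sm c p) k = c * Poly_Mapping.lookup p k"
  by (simp add: sm_def lookup_map_gen)

lemma sm_add: "sm (c::'k::field) (p + q) = sm c p + sm c q"
  by (rule poly_mapping_eqI) (simp add: lookup_add algebra_simps)

lemma sm_add_left: "sm ((c::'k::field) + d) p = sm c p + sm d p"
  by (rule poly_mapping_eqI) (simp add: lookup_add algebra_simps)

lemma sm_sm: "sm (c::'k::field) (sm d p) = sm (c * d) p"
  by (rule poly_mapping_eqI) (simp add: algebra_simps)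

lemma sm_one [simp]: "sm (1::'k::field) p = p"
  by (rule poly_mapping_eqI) simp

lemma sm_zero_left [simp]: "sm (0::'k::field) p = 0"
  by (rule poly_mapping_eqI) simp

lemma sm_zero [simp]: "sm (c::'k::field) 0 = 0"
  by (rule poly_mapping_eqI) simp

lemma sm_minus_one: "sm (-1::'k::field) p = - p"
  by (rule poly_mapping_eqI) simp

lemma sm_uminus: "sm (c::'k::field) (- p) = - sm c p"
  by (rule poly_mapping_eqI) simp

lemma sm_diff: "sm (c::'k::field) (p - q) = sm c p - sm c q"
  by (rule poly_mapping_eqI) (simp add: lookup_minus algebra_simps)

lemma sm_single: "sm (c::'k::field) (Poly_Mapping.single w a) = Poly_Mapping.single w (c * a)"
  by (rule poly_mapping_eqI) (simp add: lookup_single when_def)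

lemma sm_sum: "sm (c::'k::field) (sum f A) = (\<Sum>i\<in>A. sm c (f i))"
  by (induction A rule: infinite_finite_induct) (auto simp: sm_add)

section \<open>Linear extension\<close>

definition lsum :: "('a \<Rightarrow> 'c::zero \<Rightarrow> 'b::comm_monoid_add) \<Rightarrow> ('a \<Rightarrow>\<^sub>0 'c) \<Rightarrow> 'b" where
  "lsum h p = (\<Sum>w\<in>Poly_Mapping.keys p. h w (Poly_Mapping.lookup p w))"

lemma lsum_add:
  fixes h :: "'a \<Rightarrow> 'c::comm_monoid_add \<Rightarrow> 'b::comm_monoid_add"
  assumes "\<And>w. h w 0 = 0" "\<And>w a b. h w (a + b) = h w a + h w b"
  shows "lsum h (p + q) = lsum h p + lsum h q"
  unfolding lsum_def by (rule setsum_keys_plus_distrib) (use assms in auto)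

lemma lsum_zero [simp]: "lsum h 0 = 0"
  by (simp add: lsum_def)

lemma lsum_single:
  assumes "h w 0 = 0"
  shows "lsum h (Poly_Mapping.single w c) = h w c"
  using assms by (cases "c = 0") (auto simp: lsum_def)

lemma lsum_superset:
  assumes "finite S" "Poly_Mapping.keys p \<subseteq> S" "\<And>w. h w 0 = 0"
  shows "lsum h p = (\<Sum>w\<in>S. h w (Poly_Mapping.lookup p w))"
  unfolding lsum_def
  by (rule sum.mono_neutral_left) (use assms in \<open>auto simp: in_keys_iff\<close>)

lemma lsum_sm:
  fixes h :: "'a \<Rightarrow> 'k::field \<Rightarrow> ('b \<Rightarrow>\<^sub>0 'k)"
  assumes "\<And>w. h w 0 = 0" "\<And>w c a. h w (c * a) = sm c (h w a)"
  shows "lsum h (sm c p) = sm c (lsum h p)"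
proof -
  have "Poly_Mapping.keys (sm c p) \<subseteq> Poly_Mapping.keys p" by (auto simp: in_keys_iff)
  then have "lsum h (sm c p) = (\<Sum>w\<in>Poly_Mapping.keys p. h w (c * Poly_Mapping.lookup p w))"
    using assms(1) by (subst lsum_superset[of "Poly_Mapping.keys p"]) auto
  also have "\<dots> = sm c (lsum h p)"
    by (simp add: lsum_def sm_sum assms(2))
  finally show ?thesis .
qed

lemma lsum_hadd:
  "lsum (\<lambda>w a. h1 w a + h2 w a) p = lsum h1 p + lsum h2 p"
  by (simp add: lsum_def sum.distrib)

lemma lsum_hsum:
  "lsum (\<lambda>w a. \<Sum>i\<in>I. h i w a) p = (\<Sum>i\<in>I. lsum (h i) p)"
  unfolding lsum_def by (rule sum.swap)

lemma lsum_sum: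
  fixes h :: "'a \<Rightarrow> 'c::comm_monoid_add \<Rightarrow> 'b::comm_monoid_add"
  assumes "\<And>w. h w 0 = 0" "\<And>w a b. h w (a + b) = h w a + h w b"
  shows "lsum h (\<Sum>i\<in>I. f i) = (\<Sum>i\<in>I. lsum h (f i))"
  by (induction I rule: infinite_finite_induct) (auto simp: lsum_add[OF assms])

lemma pm_expansion:
  "p = (\<Sum>w\<in>Poly_Mapping.keys p. Poly_Mapping.single w (Poly_Mapping.lookup p w))"
proof -
  have *: "finite I \<Longrightarrow> Poly_Mapping.lookup (\<Sum>w\<in>I. Poly_Mapping.single w (Poly_Mapping.lookup p w)) j =
            (if j \<in> I then Poly_Mapping.lookup p j else 0)" for I j
    by (induction I rule: finite_induct) (auto simp: lookup_single lookup_add when_def)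
  show ?thesis
    by (rule poly_mapping_eqI) (fastforce simp add: in_keys_iff *)
qed

lemma lsum_expansion: "lsum (\<lambda>w c. Poly_Mapping.single w c) p = p"
  by (simp add: lsum_def pm_expansion[symmetric])

lemma tmul_lsum:
  "tmul p q = lsum (\<lambda>a x. lsum (\<lambda>b y. Poly_Mapping.single (a @ b) (x * y)) q) p"
  by (simp add: tmul_def lsum_def)

lemma tmul_add_left: "tmul (p1 + p2) q = tmul p1 q + tmul p2 q"
  unfolding tmul_lsum
  by (rule lsum_add) (simp_all add: lsum_def single_add distrib_right sum.distrib)

lemma tmul_add_right: "tmul p (q1 + q2) = tmul p q1 + tmul p q2"
  unfolding tmul_lsum
  by (subst lsum_add, simp, simp add: single_add distrib_left) (simp add: lsum_hadd)

lemma tmul_sm_left: "tmul (sm (c::'k::field) p) q = sm c (tmul p q)"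
  unfolding tmul_lsum
  by (rule lsum_sm) (simp_all add: lsum_def sm_sum sm_single mult.assoc)

lemma tmul_sm_right: "tmul p (sm (c::'k::field) q) = sm c (tmul p q)"
proof -
  have "tmul p (sm c q) = lsum (\<lambda>a x. sm c (lsum (\<lambda>b y. Poly_Mapping.single (a @ b) (x * y)) q)) p"
    unfolding tmul_lsum
    by (subst lsum_sm) (simp_all add: sm_single algebra_simps)
  also have "\<dots> = sm c (tmul p q)"
    unfolding tmul_lsum lsum_def[of _ p] sm_sum ..
  finally show ?thesis .
qed

lemma comm_add_left: "comm (p1 + p2) (q::'a list \<Rightarrow>\<^sub>0 'k::field) = comm p1 q + comm p2 q"
  by (simp add: comm_def tmul_add_left tmul_add_right)
lemma comm_add_right: "comm (q::'a list \<Rightarrow>\<^sub>0 'k::field) (p1 + p2) = comm q p1 + comm q p2"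
  by (simp add: comm_def tmul_add_left tmul_add_right)
lemma comm_sm_left: "comm (sm c p) (q::'a list \<Rightarrow>\<^sub>0 'k::field) = sm c (comm p q)"
  by (simp add: comm_def tmul_sm_left tmul_sm_right sm_diff)
lemma comm_sm_right: "comm (q::'a list \<Rightarrow>\<^sub>0 'k::field) (sm c p) = sm c (comm q p)"
  by (simp add: comm_def tmul_sm_left tmul_sm_right sm_diff)
lemma comm_zero_left [simp]: "comm 0 (q::'a list \<Rightarrow>\<^sub>0 'k::field) = 0"
  using comm_sm_left[of 0 0 q] by simp
lemma comm_zero_right [simp]: "comm (q::'a list \<Rightarrow>\<^sub>0 'k::field) 0 = 0"
  using comm_sm_right[of q 0 0] by simp

section \<open>Lie polynomials\<close>

lemma lie_zero: "0 \<in> lieset"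
proof -
  have "sm 0 (Poly_Mapping.single [undefined] 1) \<in> lieset"
    by (rule lieset.scal, rule lieset.gen)
  then show ?thesis by simp
qed

lemma lie_neg: "a \<in> lieset \<Longrightarrow> - a \<in> lieset"
proof -
  assume "a \<in> lieset"
  then have "sm (-1) a \<in> lieset" by (rule lieset.scal)
  then show ?thesis by (simp only: sm_minus_one)
qed

lemma lie_diff: "a \<in> lieset \<Longrightarrow> b \<in> lieset \<Longrightarrow> a - b \<in> lieset"
proof -
  assume "a \<in> lieset" "b \<in> lieset"
  then have "a + - b \<in> lieset" by (intro lieset.add lie_neg)
  then show ?thesis by (simp only: diff_conv_add_uminus)
qed




inductive_set spanof :: "('a \<Rightarrow>\<^sub>0 'k::field) set \<Rightarrow> ('a \<Rightarrow>\<^sub>0 'k) set" for A where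
  base: "a \<in> A \<Longrightarrow> a \<in> spanof A"
| zero: "0 \<in> spanof A"
| add: "a \<in> spanof A \<Longrightarrow> b \<in> spanof A \<Longrightarrow> a + b \<in> spanof A"
| smul: "a \<in> spanof A \<Longrightarrow> sm c a \<in> spanof A"

lemma spanof_diff:
  assumes "a \<in> spanof A" "b \<in> spanof A" shows "a - b \<in> spanof A"
proof -
  have "a + sm (-1) b \<in> spanof A" using assms by (intro spanof.add spanof.smul)
  then show ?thesis by (simp add: sm_minus_one)
qed

lemma spanof_lie: "A \<subseteq> lieset \<Longrightarrow> p \<in> spanof A \<Longrightarrow> p \<in> lieset"
proof -
  assume A: "A \<subseteq> lieset" and p: "p \<in> spanof A"
  from p show ?thesis
    by induction (use A lie_zero in \<open>auto intro: lieset.add lieset.scal\<close>)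
qed

lemma comm_spanof:
  assumes "p \<in> spanof A" "q \<in> spanof B" "\<And>a b. a \<in> A \<Longrightarrow> b \<in> B \<Longrightarrow> comm a b \<in> spanof C"
  shows "comm p q \<in> spanof C"
proof -
  have inner: "comm a q \<in> spanof C" if "a \<in> A" for a
    using assms(2)
  proof induction
    case (base b) then show ?case using assms(3) that by blast
  next
    case zero then show ?case by (simp add: spanof.zero)
  next
    case (add b1 b2) then show ?case by (simp add: comm_add_right spanof.add)
  next
    case (smul b c) then show ?case by (simp add: comm_sm_right spanof.smul)
  qed
  show ?thesis using assms(1)
  proof induction
    case (base a) then show ?case using inner by blast
  next
    case zero then show ?case by (simp add: spanof.zero)
  next
    case (add b1 b2) then show ?case by (simp add: comm_add_left spanof.add)
  next
    case (smul b c) then show ?case by (simp add: comm_sm_left spanof.smul)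
  qed
qed

datatype 'x lt = Tr "'x mag" | Br "'x lt" "'x lt"

definition tr :: "'x mag \<Rightarrow> ('x mag list \<Rightarrow>\<^sub>0 'k::field)" where
  "tr s = Poly_Mapping.single [s] 1"

fun ev :: "'x lt \<Rightarrow> ('x mag list \<Rightarrow>\<^sub>0 'k::field)" where
  "ev (Tr s) = tr s"
| "ev (Br a b) = comm (ev a) (ev b)"

fun msz :: "'x lt \<Rightarrow> nat" where
  "msz (Tr s) = 1"
| "msz (Br a b) = msz a + msz b"

lemma msz_pos: "0 < msz e"
  by (induction e) auto

definition spn :: "nat \<Rightarrow> ('x mag list \<Rightarrow>\<^sub>0 'k::field) set" where
  "spn k = spanof (ev ` {e. msz e = k})"

definition SP :: "('x mag list \<Rightarrow>\<^sub>0 'k::field) set" where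
  "SP = spanof (range ev)"

lemma tr_lie: "tr s \<in> lieset"
  unfolding tr_def by (rule lieset.gen)

lemma ev_lie: "ev e \<in> lieset"
  by (induction e) (auto simp: tr_lie intro: lieset.brk)

lemma spn_lie: "p \<in> spn k \<Longrightarrow> p \<in> lieset"
  unfolding spn_def by (rule spanof_lie) (auto simp: ev_lie)

lemma SP_lie: "p \<in> SP \<Longrightarrow> p \<in> lieset"
  unfolding SP_def by (rule spanof_lie) (auto simp: ev_lie)

lemma ev_spn: "ev e \<in> spn (msz e)"
  unfolding spn_def by (rule spanof.base) auto

lemma comm_spn:
  fixes p q :: "'x mag list \<Rightarrow>\<^sub>0 'k::field"
  shows "p \<in> spn i \<Longrightarrow> q \<in> spn j \<Longrightarrow> comm p q \<in> spn (i + j)"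
  unfolding spn_def
proof (rule comm_spanof)
  fix a b :: "'x mag list \<Rightarrow>\<^sub>0 'k::field"
  assume "a \<in> ev ` {e. msz e = i}" "b \<in> ev ` {e. msz e = j}"
  then obtain e1 e2 where "a = ev e1" "msz e1 = i" "b = ev e2" "msz e2 = j" by auto
  then have "comm a b = ev (Br e1 e2)" "msz (Br e1 e2) = i + j" by auto
  then show "comm a b \<in> spanof (ev ` {e. msz e = i + j})"
    by (metis (mono_tags, lifting) image_eqI mem_Collect_eq spanof.base)
qed

lemma lie_SP: "l \<in> lieset \<Longrightarrow> l \<in> SP"
proof (induction rule: lieset.induct)
  case (gen t c)
  have "sm c (ev (Tr t)) \<in> SP" unfolding SP_def by (intro spanof.smul spanof.base rangeI)
  then show ?case by (simp add: tr_def sm_single)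
next
  case (add a b) show ?case using add.IH unfolding SP_def by (rule spanof.add)
next
  case (scal a c) show ?case using scal.IH unfolding SP_def by (rule spanof.smul)
next
  case (brk a b) show ?case using brk.IH unfolding SP_def
    by (rule comm_spanof) (auto intro!: spanof.base simp: image_iff ev.simps(2)[symmetric] simp del: ev.simps)
qed





locale pl =
  fixes circ :: "('x mag list \<Rightarrow>\<^sub>0 'k::field) \<Rightarrow> ('x mag list \<Rightarrow>\<^sub>0 'k) \<Rightarrow> ('x mag list \<Rightarrow>\<^sub>0 'k)"
  assumes fp: "free_postlie circ"
begin

lemmas F = fp[unfolded free_postlie_def]

lemma circ_lie: "x \<in> lieset \<Longrightarrow> y \<in> lieset \<Longrightarrow> circ x y \<in> lieset"
  using conjunct1[OF F] by blast

lemma lin: assumes "x \<in> lieset" "y \<in> lieset" "z \<in> lieset"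
  shows "circ (x + y) z = circ x z + circ y z \<and> circ z (x + y) = circ z x + circ z y \<and>
         circ (sm c x) z = sm c (circ x z) \<and> circ z (sm c x) = sm c (circ z x)"
proof -
  have "\<forall>x\<in>lieset. \<forall>y\<in>lieset. \<forall>z\<in>lieset. \<forall>c.
         circ (x + y) z = circ x z + circ y z \<and>
         circ z (x + y) = circ z x + circ z y \<and>
         circ (sm c x) z = sm c (circ x z) \<and>
         circ z (sm c x) = sm c (circ z x)" by (rule conjunct1[OF conjunct2[OF F]])
  then show ?thesis using assms by blast
qed

lemma circ_addL: "x \<in> lieset \<Longrightarrow> y \<in> lieset \<Longrightarrow> z \<in> lieset \<Longrightarrow> circ (x + y) z = circ x z + circ y z"
  using lin by blast
lemma circ_addR: "x \<in> lieset \<Longrightarrow> y \<in> lieset \<Longrightarrow> z \<in> lieset \<Longrightarrow> circ z (x + y) = circ z x + circ z y"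
  using lin by blast
lemma circ_smL: "x \<in> lieset \<Longrightarrow> z \<in> lieset \<Longrightarrow> circ (sm c x) z = sm c (circ x z)"
  using lin[OF _ lie_zero] by blast
lemma circ_smR: "x \<in> lieset \<Longrightarrow> z \<in> lieset \<Longrightarrow> circ z (sm c x) = sm c (circ z x)"
  using lin[OF _ lie_zero] by blast
lemma ax1: "x \<in> lieset \<Longrightarrow> y \<in> lieset \<Longrightarrow> z \<in> lieset \<Longrightarrow>
   circ (circ x y) z - circ x (circ y z) - circ (circ x z) y + circ x (circ z y) = circ x (comm y z)"
  using conjunct1[OF conjunct2[OF conjunct2[OF F]]] by blast
lemma ax2: "x \<in> lieset \<Longrightarrow> y \<in> lieset \<Longrightarrow> z \<in> lieset \<Longrightarrow>
   circ (comm x y) z = comm (circ x z) y + comm x (circ y z)"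
  using conjunct1[OF conjunct2[OF conjunct2[OF conjunct2[OF F]]]] by blast
lemma ax_tr: "circ (tr s) (tr t) = tr (Node s t)"
  using conjunct2[OF conjunct2[OF conjunct2[OF conjunct2[OF F]]]] unfolding tr_def by blast

lemma circ_zeroL: assumes "z \<in> lieset" shows "circ 0 z = 0"
proof -
  have "circ (sm 0 0) z = sm 0 (circ 0 z)" by (rule circ_smL[OF lie_zero assms])
  then show ?thesis by (simp only: sm_zero_left)
qed
lemma circ_zeroR: assumes "z \<in> lieset" shows "circ z 0 = 0"
proof -
  have "circ z (sm 0 0) = sm 0 (circ z 0)" by (rule circ_smR[OF lie_zero assms])
  then show ?thesis by (simp only: sm_zero_left)
qed
lemma circ_negL: assumes "x \<in> lieset" "z \<in> lieset" shows "circ (- x) z = - circ x z"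
proof -
  have "circ (sm (-1) x) z = sm (-1) (circ x z)" by (rule circ_smL[OF assms])
  then show ?thesis by (simp only: sm_minus_one)
qed
lemma circ_negR: assumes "x \<in> lieset" "z \<in> lieset" shows "circ z (- x) = - circ z x"
proof -
  have "circ z (sm (-1) x) = sm (-1) (circ z x)" by (rule circ_smR[OF assms])
  then show ?thesis by (simp only: sm_minus_one)
qed
lemma circ_diffL: assumes "x \<in> lieset" "y \<in> lieset" "z \<in> lieset" shows "circ (x - y) z = circ x z - circ y z"
proof -
  have "circ (x + - y) z = circ x z + circ (- y) z" by (rule circ_addL[OF assms(1) lie_neg[OF assms(2)] assms(3)])
  then show ?thesis by (simp only: circ_negL[OF assms(2,3)] diff_conv_add_uminus)
qed
lemma circ_diffR: assumes "x \<in> lieset" "y \<in> lieset" "z \<in> lieset" shows "circ z (x - y) = circ z x - circ z y"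
proof -
  have "circ z (x + - y) = circ z x + circ z (- y)" by (rule circ_addR[OF assms(1) lie_neg[OF assms(2)] assms(3)])
  then show ?thesis by (simp only: circ_negR[OF assms(2,3)] diff_conv_add_uminus)
qed

lemma circ_spanL:
  assumes "p \<in> spanof A" "A \<subseteq> lieset" "z \<in> lieset" "\<And>a. a \<in> A \<Longrightarrow> circ a z \<in> spanof C"
  shows "circ p z \<in> spanof C"
  using assms(1)
proof induction
  case (base a) then show ?case using assms(4) by blast
next
  case zero then show ?case using circ_zeroL[OF assms(3)] spanof.zero by simp
next
  case (add a b)
  have "a \<in> lieset" "b \<in> lieset" using add.hyps spanof_lie[OF assms(2)] by auto
  then show ?case using add.IH assms(3) by (simp add: circ_addL spanof.add)
next
  case (smul a c)
  have "a \<in> lieset" using smul.hyps spanof_lie[OF assms(2)] by auto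
  then show ?case using smul.IH assms(3) by (simp add: circ_smL spanof.smul)
qed

lemma circ_spanR:
  assumes "p \<in> spanof A" "A \<subseteq> lieset" "z \<in> lieset" "\<And>a. a \<in> A \<Longrightarrow> circ z a \<in> spanof C"
  shows "circ z p \<in> spanof C"
  using assms(1)
proof induction
  case (base a) then show ?case using assms(4) by blast
next
  case zero then show ?case using circ_zeroR[OF assms(3)] spanof.zero by simp
next
  case (add a b)
  have "a \<in> lieset" "b \<in> lieset" using add.hyps spanof_lie[OF assms(2)] by auto
  then show ?case using add.IH assms(3) by (simp add: circ_addR spanof.add)
next
  case (smul a c)
  have "a \<in> lieset" using smul.hyps spanof_lie[OF assms(2)] by auto
  then show ?case using smul.IH assms(3) by (simp add: circ_smR spanof.smul)
qed

lemma evset_lie: "ev ` X \<subseteq> lieset"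
  using ev_lie by auto

lemma S0: "circ (ev e) (tr s) \<in> spn (msz e)"
proof (induction e)
  case (Tr t)
  have "tr (Node t s) \<in> spn (msz (Tr (Node t s)))" using ev_spn[of "Tr (Node t s)"] by simp
  then show ?case by (simp add: ax_tr)
next
  case (Br a b)
  have "circ (ev (Br a b)) (tr s) = comm (circ (ev a) (tr s)) (ev b) + comm (ev a) (circ (ev b) (tr s))"
    by (simp add: ax2 ev_lie tr_lie)
  moreover have "comm (circ (ev a) (tr s)) (ev b) \<in> spn (msz a + msz b)"
    using Br.IH(1) ev_spn by (rule comm_spn)
  moreover have "comm (ev a) (circ (ev b) (tr s)) \<in> spn (msz a + msz b)"
    using ev_spn Br.IH(2) by (rule comm_spn)
  ultimately show ?case unfolding spn_def by (simp add: spanof.add)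
qed

lemma S1: "circ (ev e1) (ev e2) \<in> spn (msz e1)"
proof (induction "msz e2" arbitrary: e1 e2 rule: less_induct)
  case less
  show ?case
  proof (cases e2)
    case (Tr s) then show ?thesis using S0 by simp
  next
    case (Br c d)
    have ltc: "msz c < msz e2" "msz d < msz e2" using Br msz_pos[of c] msz_pos[of d] by auto
    have IH: "\<And>e1 e2'. msz e2' < msz e2 \<Longrightarrow> circ (ev e1) (ev e2') \<in> spn (msz e1)"
      using less by blast
    have L: "circ (circ (ev e1) (ev x)) (ev y) \<in> spn (msz e1)" if "msz x < msz e2" "msz y < msz e2" for x y
      unfolding spn_def
    proof (rule circ_spanL[where A = "ev ` {e. msz e = msz e1}"])
      show "circ (ev e1) (ev x) \<in> spanof (ev ` {e. msz e = msz e1})" using IH[OF that(1)] unfolding spn_def .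
      fix a :: "'x mag list \<Rightarrow>\<^sub>0 'k" assume "a \<in> ev ` {e. msz e = msz e1}"
      then obtain e' where "a = ev e'" "msz e' = msz e1" by auto
      then show "circ a (ev y) \<in> spanof (ev ` {e. msz e = msz e1})" using IH[OF that(2), of e'] unfolding spn_def by simp
    qed (auto simp: evset_lie ev_lie)
    have R: "circ (ev e1) (circ (ev x) (ev y)) \<in> spn (msz e1)" if "msz x < msz e2" "msz y < msz e2" for x y
      unfolding spn_def
    proof (rule circ_spanR[where A = "ev ` {e. msz e = msz x}"])
      show "circ (ev x) (ev y) \<in> spanof (ev ` {e. msz e = msz x})" using IH[OF that(2)] unfolding spn_def .
      fix a :: "'x mag list \<Rightarrow>\<^sub>0 'k" assume "a \<in> ev ` {e. msz e = msz x}"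
      then obtain e' where "a = ev e'" "msz e' = msz x" by auto
      then show "circ (ev e1) a \<in> spanof (ev ` {e. msz e = msz e1})"
        using IH[of e' e1] that(1) unfolding spn_def by simp
    qed (auto simp: evset_lie ev_lie)
    have eq: "circ (ev e1) (ev e2) = circ (circ (ev e1) (ev c)) (ev d) - circ (ev e1) (circ (ev c) (ev d))
        - circ (circ (ev e1) (ev d)) (ev c) + circ (ev e1) (circ (ev d) (ev c))"
      using ax1[of "ev e1" "ev c" "ev d"] Br by (simp add: ev_lie)
    show ?thesis unfolding eq using L[OF ltc] R[OF ltc] L[OF ltc(2,1)] R[OF ltc(2,1)]
      unfolding spn_def by (intro spanof.add spanof_diff)
  qed
qed

lemma S2: "M \<in> spn k \<Longrightarrow> l \<in> lieset \<Longrightarrow> circ M l \<in> spn k"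
proof -
  assume M: "M \<in> spn k" and l: "l \<in> lieset"
  have Ml: "M \<in> lieset" using M spn_lie by blast
  have "l \<in> spanof (range ev)" using lie_SP[OF l] unfolding SP_def .
  then show ?thesis unfolding spn_def
  proof (rule circ_spanR)
    fix a :: "'x mag list \<Rightarrow>\<^sub>0 'k" assume "a \<in> range ev"
    then obtain e where a: "a = ev e" by auto
    show "circ M a \<in> spanof (ev ` {e. msz e = k})"
      using M[unfolded spn_def]
    proof (rule circ_spanL)
      fix b :: "'x mag list \<Rightarrow>\<^sub>0 'k" assume "b \<in> ev ` {e. msz e = k}"
      then obtain e1 where "b = ev e1" "msz e1 = k" by auto
      then show "circ b a \<in> spanof (ev ` {e. msz e = k})" using S1[of e1 e] a unfolding spn_def by simp
    qed (auto simp: evset_lie a ev_lie)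
  qed (auto simp: evset_lie Ml)
qed

end




definition eqv :: "(('x mag list \<Rightarrow>\<^sub>0 'k::field) \<Rightarrow> ('x mag list \<Rightarrow>\<^sub>0 'k) \<Rightarrow> ('x mag list \<Rightarrow>\<^sub>0 'k))
   \<Rightarrow> (('x mag list \<Rightarrow>\<^sub>0 'k) list \<Rightarrow>\<^sub>0 'k) \<Rightarrow> (('x mag list \<Rightarrow>\<^sub>0 'k) list \<Rightarrow>\<^sub>0 'k) \<Rightarrow> bool" where
  "eqv circ p q \<longleftrightarrow> p - q \<in> uideal circ"

lemma uid_neg: "p \<in> uideal circ \<Longrightarrow> - p \<in> uideal circ"
proof -
  assume "p \<in> uideal circ"
  then have "sm (-1) p \<in> uideal circ" by (rule uideal.scal)
  then show ?thesis by (simp only: sm_minus_one)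
qed

lemma uid_diff: "p \<in> uideal circ \<Longrightarrow> q \<in> uideal circ \<Longrightarrow> p - q \<in> uideal circ"
proof -
  assume "p \<in> uideal circ" "q \<in> uideal circ"
  then have "p + - q \<in> uideal circ" by (intro uideal.add uid_neg)
  then show ?thesis by (simp only: diff_conv_add_uminus)
qed

lemma eqv_refl: "eqv circ p p"
  by (simp add: eqv_def uideal.zero)

lemma eqv_eq: "p = q \<Longrightarrow> eqv circ p q"
  by (simp add: eqv_refl)

lemma eqv_sym: "eqv circ p q \<Longrightarrow> eqv circ q p"
  unfolding eqv_def using uid_neg by fastforce

lemma eqv_trans: "eqv circ p q \<Longrightarrow> eqv circ q r \<Longrightarrow> eqv circ p r"
  unfolding eqv_def
proof -
  assume "p - q \<in> uideal circ" "q - r \<in> uideal circ"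
  then have "(p - q) + (q - r) \<in> uideal circ" by (rule uideal.add)
  then show "p - r \<in> uideal circ" by simp
qed

lemma eqv_add: "eqv circ p1 q1 \<Longrightarrow> eqv circ p2 q2 \<Longrightarrow> eqv circ (p1 + p2) (q1 + q2)"
  unfolding eqv_def
proof -
  assume "p1 - q1 \<in> uideal circ" "p2 - q2 \<in> uideal circ"
  then have "(p1 - q1) + (p2 - q2) \<in> uideal circ" by (rule uideal.add)
  then show "p1 + p2 - (q1 + q2) \<in> uideal circ" by (simp add: algebra_simps)
qed

lemma eqv_diff: "eqv circ p1 q1 \<Longrightarrow> eqv circ p2 q2 \<Longrightarrow> eqv circ (p1 - p2) (q1 - q2)"
  unfolding eqv_def
proof -
  assume "p1 - q1 \<in> uideal circ" "p2 - q2 \<in> uideal circ"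
  then have "(p1 - q1) - (p2 - q2) \<in> uideal circ" by (rule uid_diff)
  then show "p1 - p2 - (q1 - q2) \<in> uideal circ" by (simp add: algebra_simps)
qed

lemma eqv_sm: "eqv circ p q \<Longrightarrow> eqv circ (sm c p) (sm c q)"
  unfolding eqv_def
proof -
  assume "p - q \<in> uideal circ"
  then have "sm c (p - q) \<in> uideal circ" by (rule uideal.scal)
  then show "sm c p - sm c q \<in> uideal circ" by (simp only: sm_diff)
qed

lemma eqv_sum: "(\<And>i. i \<in> A \<Longrightarrow> eqv circ (f i) (g i)) \<Longrightarrow> eqv circ (sum f A) (sum g A)"
  by (induction A rule: infinite_finite_induct) (auto simp: eqv_refl eqv_add)

lemma rel_add:
  assumes "set W \<subseteq> lieset" "set b \<subseteq> lieset" "l1 \<in> lieset" "l2 \<in> lieset"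
  shows "eqv circ (Poly_Mapping.single (W @ [l1 + l2] @ b) c)
           (Poly_Mapping.single (W @ [l1] @ b) c + Poly_Mapping.single (W @ [l2] @ b) c)"
proof -
  have "sm c (Poly_Mapping.single (W @ [l1 + l2] @ b) 1 - Poly_Mapping.single (W @ [l1] @ b) 1
       - Poly_Mapping.single (W @ [l2] @ b) 1) \<in> uideal circ"
    by (intro uideal.scal uideal.lin_add assms)
  then show ?thesis unfolding eqv_def by (simp add: sm_diff sm_add sm_single algebra_simps)
qed

lemma rel_sm:
  assumes "set W \<subseteq> lieset" "set b \<subseteq> lieset" "l \<in> lieset"
  shows "eqv circ (Poly_Mapping.single (W @ [sm d l] @ b) c) (Poly_Mapping.single (W @ [l] @ b) (c * d))"
proof -
  have "sm c (Poly_Mapping.single (W @ [sm d l] @ b) 1 - Poly_Mapping.single (W @ [l] @ b) d) \<in> uideal circ"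
    by (intro uideal.scal uideal.lin_sm assms)
  then show ?thesis unfolding eqv_def by (simp add: sm_diff sm_single)
qed

lemma rel_lie:
  assumes "set W \<subseteq> lieset" "set b \<subseteq> lieset" "l1 \<in> lieset" "l2 \<in> lieset"
  shows "eqv circ (Poly_Mapping.single (W @ [l1, l2] @ b) c)
           (Poly_Mapping.single (W @ [l2, l1] @ b) c + Poly_Mapping.single (W @ [pbr circ comm l1 l2] @ b) c)"
proof -
  have "sm c (Poly_Mapping.single (W @ [l1, l2] @ b) 1 - Poly_Mapping.single (W @ [l2, l1] @ b) 1
       - Poly_Mapping.single (W @ [pbr circ comm l1 l2] @ b) 1) \<in> uideal circ"
    by (intro uideal.scal uideal.lie_rel assms)
  then show ?thesis unfolding eqv_def by (simp add: sm_diff sm_add sm_single algebra_simps)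
qed

section \<open>Right multiplication by a letter\<close>

definition Rl :: "'l \<Rightarrow> ('l list \<Rightarrow>\<^sub>0 'k::field) \<Rightarrow> ('l list \<Rightarrow>\<^sub>0 'k)" where
  "Rl l f = lsum (\<lambda>w c. Poly_Mapping.single (w @ [l]) c) f"

lemma Rl_single [simp]: "Rl l (Poly_Mapping.single w c) = Poly_Mapping.single (w @ [l]) c"
  unfolding Rl_def by (rule lsum_single) simp

lemma Rl_add: "Rl l (p + q) = Rl l p + Rl l q"
  unfolding Rl_def by (rule lsum_add) (simp_all add: single_add)

lemma Rl_sm: "Rl l (sm c p) = sm c (Rl l p)"
  unfolding Rl_def by (rule lsum_sm) (simp_all add: sm_single)

lemma Rl_zero [simp]: "Rl l 0 = 0"
  by (simp add: Rl_def)

lemma Rl_neg: "Rl l (- p) = - Rl l p"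
  using Rl_sm[of l "-1" p] by (simp only: sm_minus_one)

lemma Rl_diff: "Rl l (p - q) = Rl l p - Rl l q"
  by (simp only: diff_conv_add_uminus Rl_add Rl_neg)

lemma Rl_ideal: "p \<in> uideal circ \<Longrightarrow> l \<in> lieset \<Longrightarrow> Rl l p \<in> uideal circ"
proof (induction rule: uideal.induct)
  case (lin_add a b l1 l2)
  have "Poly_Mapping.single (a @ [l1 + l2] @ (b @ [l])) 1 - Poly_Mapping.single (a @ [l1] @ (b @ [l])) 1
       - Poly_Mapping.single (a @ [l2] @ (b @ [l])) 1 \<in> uideal circ"
    by (rule uideal.lin_add) (use lin_add in auto)
  then show ?case by (simp add: Rl_diff)
next
  case (lin_sm a b l1 c)
  have "Poly_Mapping.single (a @ [sm c l1] @ (b @ [l])) 1 - Poly_Mapping.single (a @ [l1] @ (b @ [l])) c \<in> uideal circ"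
    by (rule uideal.lin_sm) (use lin_sm in auto)
  then show ?case by (simp add: Rl_diff)
next
  case (lie_rel a b l1 l2)
  have "Poly_Mapping.single (a @ [l1, l2] @ (b @ [l])) 1 - Poly_Mapping.single (a @ [l2, l1] @ (b @ [l])) 1
       - Poly_Mapping.single (a @ [pbr circ comm l1 l2] @ (b @ [l])) 1 \<in> uideal circ"
    by (rule uideal.lie_rel) (use lie_rel in auto)
  then show ?case by (simp add: Rl_diff)
next
  case zero then show ?case by (simp add: uideal.zero)
next
  case (add p q) then show ?case by (simp add: Rl_add uideal.add)
next
  case (scal p c) then show ?case by (simp add: Rl_sm uideal.scal)
qed

lemma Rl_eqv: "eqv circ p q \<Longrightarrow> l \<in> lieset \<Longrightarrow> eqv circ (Rl l p) (Rl l q)"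
  unfolding eqv_def using Rl_ideal[of "p - q" circ l] by (simp add: Rl_diff)

section \<open>Left comb decomposition\<close>

fun root :: "'x mag \<Rightarrow> 'x" where
  "root (Leaf x) = x"
| "root (Node a b) = root a"

fun spl :: "'x mag \<Rightarrow> 'x mag list" where
  "spl (Leaf x) = []"
| "spl (Node a b) = spl a @ [b]"

definition trw :: "'x mag \<Rightarrow> ('x mag list \<Rightarrow>\<^sub>0 'k::field) list" where
  "trw t = map tr (spl t)"

lemma trw_lie: "set (trw t) \<subseteq> lieset"
  by (auto simp: trw_def tr_lie)

lemma trw_Node [simp]: "trw (Node a b) = trw a @ [tr b]"
  by (simp add: trw_def)

lemma trw_Leaf [simp]: "trw (Leaf x) = []"
  by (simp add: trw_def)

definition isr :: "'x \<Rightarrow> 'x mag list \<Rightarrow> bool" where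
  "isr y w \<longleftrightarrow> (\<exists>t. w = [t] \<and> root t = y)"

lemma isr_single [simp]: "isr y [t] \<longleftrightarrow> root t = y"
  by (simp add: isr_def)

definition psi :: "'x \<Rightarrow> ('x mag list \<Rightarrow>\<^sub>0 'k::field) \<Rightarrow> (('x mag list \<Rightarrow>\<^sub>0 'k) list \<Rightarrow>\<^sub>0 'k)" where
  "psi y p = lsum (\<lambda>w c. Poly_Mapping.single (trw (hd w)) (if isr y w then c else 0)) p"

lemma psi_add: "psi y (p + q) = psi y p + psi y q"
  unfolding psi_def by (rule lsum_add) (auto simp: single_add)

lemma psi_sm: "psi y (sm c p) = sm c (psi y p)"
  unfolding psi_def by (rule lsum_sm) (auto simp: sm_single)

lemma psi_zero [simp]: "psi y 0 = 0"
  by (simp add: psi_def)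

lemma psi_neg: "psi y (- p) = - psi y p"
  using psi_sm[of y "-1" p] by (simp only: sm_minus_one)

lemma psi_diff: "psi y (p - q) = psi y p - psi y q"
  by (simp only: diff_conv_add_uminus psi_add psi_neg)

lemma psi_sum: "psi y (sum f A) = (\<Sum>i\<in>A. psi y (f i))"
  unfolding psi_def by (rule lsum_sum) (auto simp: single_add)

lemma psi_single: "psi y (Poly_Mapping.single [t] c) = Poly_Mapping.single (trw t) (if root t = y then c else 0)"
  unfolding psi_def by (subst lsum_single) simp_all

lemma psi_tr: "psi y (tr t) = Poly_Mapping.single (trw t) (if root t = y then 1 else 0)"
  unfolding tr_def by (rule psi_single)




context pl
begin

definition Dp :: "'x \<Rightarrow> 'x mag \<Rightarrow> ('x mag list \<Rightarrow>\<^sub>0 'k) \<Rightarrow> bool" where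
  "Dp y t l \<longleftrightarrow> eqv circ (psi y (circ (tr t) l)) (Poly_Mapping.single (trw t @ [l]) (if root t = y then 1 else 0))"

lemma rel_add0:
  assumes "set W \<subseteq> lieset" "l1 \<in> lieset" "l2 \<in> lieset"
  shows "eqv circ (Poly_Mapping.single (W @ [l1 + l2]) c)
           (Poly_Mapping.single (W @ [l1]) c + Poly_Mapping.single (W @ [l2]) c)"
  using rel_add[of W "[]" l1 l2 circ c] assms by simp

lemma rel_sm0:
  assumes "set W \<subseteq> lieset" "l \<in> lieset"
  shows "eqv circ (Poly_Mapping.single (W @ [sm d l]) c) (Poly_Mapping.single (W @ [l]) (c * d))"
  using rel_sm[of W "[]" l circ d c] assms by simp

lemma rel_lie0:
  assumes "set W \<subseteq> lieset" "l1 \<in> lieset" "l2 \<in> lieset"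
  shows "eqv circ (Poly_Mapping.single (W @ [l1, l2]) c)
           (Poly_Mapping.single (W @ [l2, l1]) c + Poly_Mapping.single (W @ [pbr circ comm l1 l2]) c)"
  using rel_lie[of W "[]" l1 l2 circ c] assms by simp

lemma Dp_add:
  assumes "l1 \<in> lieset" "l2 \<in> lieset" "Dp y t l1" "Dp y t l2"
  shows "Dp y t (l1 + l2)"
proof -
  let ?E = "if root t = y then 1 else (0::'k)"
  have e1: "psi y (circ (tr t) (l1 + l2)) = psi y (circ (tr t) l1) + psi y (circ (tr t) l2)"
    by (simp only: circ_addR[OF assms(1,2) tr_lie] psi_add)
  have e2: "eqv circ (psi y (circ (tr t) l1) + psi y (circ (tr t) l2))
     (Poly_Mapping.single (trw t @ [l1]) ?E + Poly_Mapping.single (trw t @ [l2]) ?E)"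
    using assms(3,4) unfolding Dp_def by (rule eqv_add)
  have e3: "eqv circ (Poly_Mapping.single (trw t @ [l1]) ?E + Poly_Mapping.single (trw t @ [l2]) ?E)
      (Poly_Mapping.single (trw t @ [l1 + l2]) ?E)"
    by (rule eqv_sym, rule rel_add0[OF trw_lie assms(1,2)])
  show ?thesis unfolding Dp_def e1 by (rule eqv_trans[OF e2 e3])
qed

lemma Dp_sm:
  assumes "l \<in> lieset" "Dp y t l"
  shows "Dp y t (sm c l)"
proof -
  let ?E = "if root t = y then 1 else (0::'k)"
  have e1: "psi y (circ (tr t) (sm c l)) = sm c (psi y (circ (tr t) l))"
    by (simp only: circ_smR[OF assms(1) tr_lie] psi_sm)
  have e2: "eqv circ (sm c (psi y (circ (tr t) l))) (sm c (Poly_Mapping.single (trw t @ [l]) ?E))"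
    using assms(2) unfolding Dp_def by (rule eqv_sm)
  have e3: "sm c (Poly_Mapping.single (trw t @ [l]) ?E) = Poly_Mapping.single (trw t @ [l]) (?E * c)"
    by (simp only: sm_single mult.commute)
  have e4: "eqv circ (Poly_Mapping.single (trw t @ [l]) (?E * c)) (Poly_Mapping.single (trw t @ [sm c l]) ?E)"
    by (rule eqv_sym, rule rel_sm0[OF trw_lie assms(1)])
  show ?thesis unfolding Dp_def e1 using eqv_trans[OF e2[unfolded e3] e4] .
qed

lemma Dp_zero: "Dp y t 0"
proof -
  let ?E = "if root t = y then 1 else (0::'k)"
  have "eqv circ (Poly_Mapping.single (trw t @ [sm 0 0]) ?E) (Poly_Mapping.single (trw t @ [0]) (?E * 0))"
    by (rule rel_sm0[OF trw_lie lie_zero])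
  then have "eqv circ (Poly_Mapping.single (trw t @ [0]) ?E) 0"
    by (simp only: sm_zero_left mult_zero_right single_zero)
  then have "eqv circ 0 (Poly_Mapping.single (trw t @ [0]) ?E)" by (rule eqv_sym)
  then show ?thesis unfolding Dp_def by (simp only: circ_zeroR[OF tr_lie] psi_zero)
qed

lemma Dp_span:
  assumes "p \<in> spanof A" "A \<subseteq> lieset" "\<And>a. a \<in> A \<Longrightarrow> Dp y t a"
  shows "Dp y t p"
  using assms(1)
proof induction
  case (base a) then show ?case using assms(3) by blast
next
  case zero then show ?case by (rule Dp_zero)
next
  case (add a b) then show ?case using spanof_lie[OF assms(2)] by (intro Dp_add) auto
next
  case (smul a c) then show ?case using spanof_lie[OF assms(2)] by (intro Dp_sm) auto
qed

lemma msz_one: assumes "msz e = 1" shows "\<exists>t. e = Tr t"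
proof (cases e)
  case (Br a b) then have "msz e = msz a + msz b" by simp
  with msz_pos[of a] msz_pos[of b] assms show ?thesis by simp
qed simp

lemma Dprime:
  assumes "\<And>t. Dp y t l" "l \<in> lieset" "M \<in> spn 1"
  shows "eqv circ (psi y (circ M l)) (Rl l (psi y M))"
  using assms(3) unfolding spn_def
proof induction
  case (base a)
  then obtain t where "a = tr t" using msz_one by fastforce
  then show ?case using assms(1)[of t] by (simp add: Dp_def psi_tr)
next
  case zero then show ?case by (simp add: circ_zeroL[OF assms(2)] eqv_refl)
next
  case (add a b)
  have "a \<in> lieset" "b \<in> lieset" using add.hyps spanof_lie[OF evset_lie] by auto
  then show ?case using add.IH by (simp add: circ_addL assms(2) psi_add Rl_add eqv_add)
next
  case (smul a c)
  have "a \<in> lieset" using smul.hyps spanof_lie[OF evset_lie] by auto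
  then show ?case using smul.IH by (simp add: circ_smL assms(2) psi_sm Rl_sm eqv_sm)
qed

lemma Dmain: "Dp y t (ev e)"
proof (induction "msz e" arbitrary: e t rule: less_induct)
  case less
  show ?case
  proof (cases e)
    case (Tr s)
    then show ?thesis by (simp add: Dp_def ax_tr psi_tr eqv_refl)
  next
    case (Br a b)
    let ?A = "ev a :: 'x mag list \<Rightarrow>\<^sub>0 'k" and ?B = "ev b :: 'x mag list \<Rightarrow>\<^sub>0 'k"
    let ?E = "if root t = y then 1 else (0::'k)"
    let ?W = "trw t :: ('x mag list \<Rightarrow>\<^sub>0 'k) list"
    let ?G = "tr t :: 'x mag list \<Rightarrow>\<^sub>0 'k"
    let ?s = "\<lambda>w. Poly_Mapping.single w ?E"
    have lt: "msz a < msz e" "msz b < msz e" using Br msz_pos[of a] msz_pos[of b] by auto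
    have IH: "\<And>e' t'. msz e' < msz e \<Longrightarrow> Dp y t' (ev e')" using less by blast
    have Aa: "?A \<in> lieset" "?B \<in> lieset" "?G \<in> lieset" by (auto simp: ev_lie tr_lie)
    have Dspn: "Dp y t p" if "p \<in> spn k" "k < msz e" for p k
      using that(1) unfolding spn_def
      by (rule Dp_span) (use IH that(2) in \<open>auto simp: evset_lie\<close>)
    have T1: "eqv circ (psi y (circ (circ ?G x) z)) (?s (?W @ [x, z]))"
      if xz: "x \<in> lieset" "z \<in> lieset" and D: "\<And>t'. Dp y t' x" "\<And>t'. Dp y t' z" for x z
    proof -
      have M: "circ ?G x \<in> spn 1" using S2[OF ev_spn[of "Tr t"] xz(1)] by simp
      have e1: "eqv circ (psi y (circ (circ ?G x) z)) (Rl z (psi y (circ ?G x)))"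
        by (rule Dprime[OF D(2) xz(2) M])
      have e2: "eqv circ (Rl z (psi y (circ ?G x))) (Rl z (?s (?W @ [x])))"
        using D(1)[of t] xz(2) unfolding Dp_def by (rule Rl_eqv)
      have e3: "Rl z (?s (?W @ [x])) = ?s (?W @ [x, z])" by simp
      show ?thesis using eqv_trans[OF e1 e2] unfolding e3 .
    qed
    have DA: "\<And>t'. Dp y t' ?A" "\<And>t'. Dp y t' ?B" using IH lt by auto
    have T1a: "eqv circ (psi y (circ (circ ?G ?A) ?B)) (?s (?W @ [?A, ?B]))"
      by (rule T1[OF Aa(1,2) DA(1,2)])
    have T3a: "eqv circ (psi y (circ (circ ?G ?B) ?A)) (?s (?W @ [?B, ?A]))"
      by (rule T1[OF Aa(2,1) DA(2,1)])
    have T2a: "eqv circ (psi y (circ ?G (circ ?A ?B))) (?s (?W @ [circ ?A ?B]))"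
      using Dspn[OF S1[of a b] lt(1)] unfolding Dp_def .
    have T4a: "eqv circ (psi y (circ ?G (circ ?B ?A))) (?s (?W @ [circ ?B ?A]))"
      using Dspn[OF S1[of b a] lt(2)] unfolding Dp_def .
    have ax: "circ ?G (comm ?A ?B) = circ (circ ?G ?A) ?B - circ ?G (circ ?A ?B) - circ (circ ?G ?B) ?A + circ ?G (circ ?B ?A)"
      using ax1[OF Aa(3,1,2)] by (rule sym)
    have lie2: "circ ?A ?B \<in> lieset" "circ ?B ?A \<in> lieset" "comm ?A ?B \<in> lieset"
      using Aa by (auto intro: circ_lie lieset.brk)
    have lie3: "sm (-1) (circ ?B ?A) \<in> lieset" by (rule lieset.scal[OF lie2(2)])
    have lie4: "circ ?A ?B + sm (-1) (circ ?B ?A) \<in> lieset" by (rule lieset.add[OF lie2(1) lie3])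
    have X: "eqv circ (psi y (circ ?G (comm ?A ?B)))
       (?s (?W @ [?A, ?B]) - ?s (?W @ [circ ?A ?B]) - ?s (?W @ [?B, ?A]) + ?s (?W @ [circ ?B ?A]))"
      unfolding ax psi_add psi_diff by (rule eqv_add[OF eqv_diff[OF eqv_diff[OF T1a T2a] T3a] T4a])
    have I1: "eqv circ (?s (?W @ [?A, ?B])) (?s (?W @ [?B, ?A]) + ?s (?W @ [pbr circ comm ?A ?B]))"
      by (rule rel_lie0[OF trw_lie Aa(1,2)])
    have pbr_eq: "pbr circ comm ?A ?B = (circ ?A ?B + sm (-1) (circ ?B ?A)) + comm ?A ?B"
      by (simp add: pbr_def sm_minus_one)
    have I2: "eqv circ (?s (?W @ [pbr circ comm ?A ?B]))
        (?s (?W @ [circ ?A ?B + sm (-1) (circ ?B ?A)]) + ?s (?W @ [comm ?A ?B]))"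
      unfolding pbr_eq by (rule rel_add0[OF trw_lie lie4 lie2(3)])
    have I3: "eqv circ (?s (?W @ [circ ?A ?B + sm (-1) (circ ?B ?A)]))
        (?s (?W @ [circ ?A ?B]) + ?s (?W @ [sm (-1) (circ ?B ?A)]))"
      by (rule rel_add0[OF trw_lie lie2(1) lie3])
    have I4: "eqv circ (?s (?W @ [sm (-1) (circ ?B ?A)])) (Poly_Mapping.single (?W @ [circ ?B ?A]) (?E * -1))"
      by (rule rel_sm0[OF trw_lie lie2(2)])
    have neg: "Poly_Mapping.single (?W @ [circ ?B ?A]) (?E * -1) = - ?s (?W @ [circ ?B ?A])"
      by (simp add: single_uminus)
    let ?i1 = "?s (?W @ [?A, ?B]) - (?s (?W @ [?B, ?A]) + ?s (?W @ [pbr circ comm ?A ?B]))"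
    let ?i2 = "?s (?W @ [pbr circ comm ?A ?B]) - (?s (?W @ [circ ?A ?B + sm (-1) (circ ?B ?A)]) + ?s (?W @ [comm ?A ?B]))"
    let ?i3 = "?s (?W @ [circ ?A ?B + sm (-1) (circ ?B ?A)]) - (?s (?W @ [circ ?A ?B]) + ?s (?W @ [sm (-1) (circ ?B ?A)]))"
    let ?i4 = "?s (?W @ [sm (-1) (circ ?B ?A)]) - - ?s (?W @ [circ ?B ?A])"
    have "?i1 \<in> uideal circ" using I1 unfolding eqv_def .
    moreover have "?i2 \<in> uideal circ" using I2 unfolding eqv_def .
    moreover have "?i3 \<in> uideal circ" using I3 unfolding eqv_def .
    moreover have "?i4 \<in> uideal circ" using I4 unfolding eqv_def neg .
    ultimately have "?i1 + ?i2 + ?i3 + ?i4 \<in> uideal circ" by (intro uideal.add)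
    moreover have "?i1 + ?i2 + ?i3 + ?i4 = (?s (?W @ [?A, ?B]) - ?s (?W @ [circ ?A ?B]) - ?s (?W @ [?B, ?A]) + ?s (?W @ [circ ?B ?A])) - ?s (?W @ [comm ?A ?B])"
      by (simp only: diff_conv_add_uminus minus_add_distrib minus_minus add.assoc add.left_commute[of "- ?s (?W @ [circ ?A ?B + sm (-1) (circ ?B ?A)])"])
         (simp add: algebra_simps)
    ultimately have fin: "eqv circ (?s (?W @ [?A, ?B]) - ?s (?W @ [circ ?A ?B]) - ?s (?W @ [?B, ?A]) + ?s (?W @ [circ ?B ?A]))
                 (?s (?W @ [comm ?A ?B]))"
      unfolding eqv_def by (simp only:)
    have "eqv circ (psi y (circ ?G (comm ?A ?B))) (?s (?W @ [comm ?A ?B]))"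
      by (rule eqv_trans[OF X fin])
    then show ?thesis using Br by (simp add: Dp_def)
  qed
qed

lemma Dall: assumes l: "l \<in> lieset" shows "Dp y t l"
proof -
  have "l \<in> spanof (range ev)" using lie_SP[OF l] unfolding SP_def .
  then show ?thesis
  proof (rule Dp_span)
    show "range ev \<subseteq> lieset" using ev_lie by blast
    fix a :: "'x mag list \<Rightarrow>\<^sub>0 'k" assume "a \<in> range ev"
    then obtain e where "a = ev e" by blast
    then show "Dp y t a" by (simp only: Dmain)
  qed
qed

lemma Cfold:
  assumes "set w \<subseteq> lieset"
  shows "foldl circ (tr (Leaf x)) w \<in> spn 1 \<and>
         eqv circ (psi y (foldl circ (tr (Leaf x)) w)) (Poly_Mapping.single w (if x = y then 1 else 0))"
  using assms
proof (induction w rule: rev_induct)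
  case Nil
  have "tr (Leaf x) \<in> spn 1" using ev_spn[of "Tr (Leaf x)"] by simp
  then show ?case by (simp add: psi_tr eqv_refl)
next
  case (snoc l w)
  have l: "l \<in> lieset" and w: "set w \<subseteq> lieset" using snoc.prems by auto
  let ?E = "if x = y then 1 else (0::'k)"
  let ?M = "foldl circ (tr (Leaf x)) w"
  have M: "?M \<in> spn 1" and e: "eqv circ (psi y ?M) (Poly_Mapping.single w ?E)"
    using snoc.IH[OF w] by auto
  have e1: "eqv circ (psi y (circ ?M l)) (Rl l (psi y ?M))"
    by (rule Dprime[OF Dall[OF l] l M])
  have e2: "eqv circ (Rl l (psi y ?M)) (Rl l (Poly_Mapping.single w ?E))"
    by (rule Rl_eqv[OF e l])
  have e3: "Rl l (Poly_Mapping.single w ?E) = Poly_Mapping.single (w @ [l]) ?E"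
    by (rule Rl_single)
  have "eqv circ (psi y (circ ?M l)) (Poly_Mapping.single (w @ [l]) ?E)"
    using eqv_trans[OF e1 e2] unfolding e3 .
  moreover have "circ ?M l \<in> spn 1" by (rule S2[OF M l])
  ultimately show ?case by simp
qed

end




context pl
begin

lemma fold_lie: "g \<in> lieset \<Longrightarrow> set w \<subseteq> lieset \<Longrightarrow> foldl circ g w \<in> lieset"
  by (induction w arbitrary: g) (auto simp: circ_lie)

lemma fold_add: "Y1 \<in> lieset \<Longrightarrow> Y2 \<in> lieset \<Longrightarrow> set b \<subseteq> lieset \<Longrightarrow>
   foldl circ (Y1 + Y2) b = foldl circ Y1 b + foldl circ Y2 b"
proof (induction b arbitrary: Y1 Y2)
  case Nil then show ?case by simp
next
  case (Cons l b)
  have l: "l \<in> lieset" and b: "set b \<subseteq> lieset" using Cons.prems by auto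
  have "foldl circ (Y1 + Y2) (l # b) = foldl circ (circ Y1 l + circ Y2 l) b"
    by (simp add: circ_addL[OF Cons.prems(1,2) l])
  also have "\<dots> = foldl circ (circ Y1 l) b + foldl circ (circ Y2 l) b"
    by (rule Cons.IH[OF circ_lie[OF Cons.prems(1) l] circ_lie[OF Cons.prems(2) l] b])
  finally show ?case by simp
qed

lemma fold_sm: "Y \<in> lieset \<Longrightarrow> set b \<subseteq> lieset \<Longrightarrow> foldl circ (sm c Y) b = sm c (foldl circ Y b)"
proof (induction b arbitrary: Y)
  case Nil then show ?case by simp
next
  case (Cons l b)
  have l: "l \<in> lieset" and b: "set b \<subseteq> lieset" using Cons.prems by auto
  have "foldl circ (sm c Y) (l # b) = foldl circ (sm c (circ Y l)) b"
    by (simp add: circ_smL[OF Cons.prems(1) l])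
  also have "\<dots> = sm c (foldl circ (circ Y l) b)"
    by (rule Cons.IH[OF circ_lie[OF Cons.prems(1) l] b])
  finally show ?case by simp
qed

lemma fold_zero: "set b \<subseteq> lieset \<Longrightarrow> foldl circ 0 b = 0"
  using fold_sm[OF lie_zero, of b 0] by simp

lemma fold_diff: "Y1 \<in> lieset \<Longrightarrow> Y2 \<in> lieset \<Longrightarrow> set b \<subseteq> lieset \<Longrightarrow>
   foldl circ (Y1 - Y2) b = foldl circ Y1 b - foldl circ Y2 b"
proof -
  assume a: "Y1 \<in> lieset" "Y2 \<in> lieset" "set b \<subseteq> lieset"
  have "foldl circ (Y1 + sm (-1) Y2) b = foldl circ Y1 b + sm (-1) (foldl circ Y2 b)"
    by (simp only: fold_add[OF a(1) lieset.scal[OF a(2)] a(3)] fold_sm[OF a(2) a(3)])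
  then show ?thesis by (simp only: sm_minus_one diff_conv_add_uminus)
qed

lemma actF_lsum: "actF circ g f = lsum (\<lambda>w c. sm c (foldl circ g w)) f"
  by (simp add: actF_def lsum_def)

lemma actF_add: "actF circ g (p + q) = actF circ g p + actF circ g q"
  unfolding actF_lsum by (rule lsum_add) (simp_all add: sm_add_left)

lemma actF_sm: "actF circ g (sm c p) = sm c (actF circ g p)"
  unfolding actF_lsum by (rule lsum_sm) (simp_all add: sm_sm)

lemma actF_zero [simp]: "actF circ g 0 = 0"
  by (simp add: actF_def)

lemma actF_neg: "actF circ g (- p) = - actF circ g p"
  using actF_sm[of g "-1" p] by (simp only: sm_minus_one)

lemma actF_diff: "actF circ g (p - q) = actF circ g p - actF circ g q"
  by (simp only: diff_conv_add_uminus actF_add actF_neg)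

lemma actF_single: "actF circ g (Poly_Mapping.single w c) = sm c (foldl circ g w)"
  unfolding actF_lsum by (rule lsum_single) simp

lemma actF_ideal:
  assumes "p \<in> uideal circ" "g \<in> lieset"
  shows "actF circ g p = 0"
  using assms(1)
proof induction
  case (lin_add a b l1 l2)
  let ?G = "foldl circ g a"
  have G: "?G \<in> lieset" by (rule fold_lie[OF assms(2) lin_add(1)])
  have c: "circ ?G l1 \<in> lieset" "circ ?G l2 \<in> lieset" using G lin_add by (auto intro: circ_lie)
  have "foldl circ (circ ?G (l1 + l2)) b = foldl circ (circ ?G l1) b + foldl circ (circ ?G l2) b"
    by (simp only: circ_addR[OF lin_add(3,4) G] fold_add[OF c lin_add(2)])
  then show ?case by (simp add: actF_diff actF_single)
next
  case (lin_sm a b l c)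
  let ?G = "foldl circ g a"
  have G: "?G \<in> lieset" by (rule fold_lie[OF assms(2) lin_sm(1)])
  have cl: "circ ?G l \<in> lieset" using G lin_sm by (auto intro: circ_lie)
  have "foldl circ (circ ?G (sm c l)) b = sm c (foldl circ (circ ?G l) b)"
    by (simp only: circ_smR[OF lin_sm(3) G] fold_sm[OF cl lin_sm(2)])
  then show ?case by (simp add: actF_diff actF_single)
next
  case (lie_rel a b l1 l2)
  let ?G = "foldl circ g a"
  have G: "?G \<in> lieset" by (rule fold_lie[OF assms(2) lie_rel(1)])
  have l: "l1 \<in> lieset" "l2 \<in> lieset" using lie_rel by auto
  have c: "circ l1 l2 \<in> lieset" "circ l2 l1 \<in> lieset" "comm l1 l2 \<in> lieset"
    using l by (auto intro: circ_lie lieset.brk)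
  have c2: "circ (circ ?G l1) l2 \<in> lieset" "circ (circ ?G l2) l1 \<in> lieset"
    "circ ?G (pbr circ comm l1 l2) \<in> lieset"
    using G l c by (auto intro!: circ_lie lie_diff lieset.add simp: pbr_def)
  have "circ ?G (pbr circ comm l1 l2) = circ ?G (circ l1 l2) - circ ?G (circ l2 l1) + circ ?G (comm l1 l2)"
    unfolding pbr_def
    by (simp only: circ_addR[OF lie_diff[OF c(1,2)] c(3) G] circ_diffR[OF c(1,2) G])
  also have "\<dots> = circ (circ ?G l1) l2 - circ (circ ?G l2) l1"
    using ax1[OF G l] by (simp add: algebra_simps)
  finally have eq: "circ (circ ?G l1) l2 - circ (circ ?G l2) l1 - circ ?G (pbr circ comm l1 l2) = 0"
    by simp
  have "foldl circ (circ (circ ?G l1) l2) b - foldl circ (circ (circ ?G l2) l1) b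
        - foldl circ (circ ?G (pbr circ comm l1 l2)) b
      = foldl circ (circ (circ ?G l1) l2 - circ (circ ?G l2) l1 - circ ?G (pbr circ comm l1 l2)) b"
    by (simp only: fold_diff[OF lie_diff[OF c2(1,2)] c2(3) lie_rel(2)] fold_diff[OF c2(1,2) lie_rel(2)])
  also have "\<dots> = 0" by (simp only: eq fold_zero[OF lie_rel(2)])
  finally show ?case by (simp add: actF_diff actF_single)
next
  case zero then show ?case by simp
next
  case (add p q) then show ?case by (simp add: actF_add)
next
  case (scal p c) then show ?case by (simp add: actF_sm)
qed

lemma comb: "foldl circ (tr (Leaf (root t))) (trw t) = tr t"
  by (induction t) (simp_all add: ax_tr)

lemma canmap_lsum: "canmap circ u = lsum (\<lambda>x f. actF circ (tr (Leaf x)) f) u"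
  by (simp add: canmap_def lsum_def tr_def)

lemma canmap_sum: "canmap circ (sum f A) = (\<Sum>i\<in>A. canmap circ (f i))"
  unfolding canmap_lsum by (rule lsum_sum) (simp_all add: actF_add)

lemma canmap_single: "canmap circ (Poly_Mapping.single x f) = actF circ (tr (Leaf x)) f"
  unfolding canmap_lsum by (rule lsum_single) simp

lemma psi_actF:
  assumes "f \<in> wordsL"
  shows "eqv circ (psi y (actF circ (tr (Leaf x)) f)) (sm (if x = y then 1 else 0) f)"
proof -
  let ?E = "if x = y then 1 else (0::'k)"
  have "psi y (actF circ (tr (Leaf x)) f) =
     (\<Sum>w\<in>Poly_Mapping.keys f. sm (Poly_Mapping.lookup f w) (psi y (foldl circ (tr (Leaf x)) w)))"
    by (simp add: actF_def psi_sum psi_sm)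
  moreover have "eqv circ (\<Sum>w\<in>Poly_Mapping.keys f. sm (Poly_Mapping.lookup f w) (psi y (foldl circ (tr (Leaf x)) w)))
     (\<Sum>w\<in>Poly_Mapping.keys f. sm (Poly_Mapping.lookup f w) (Poly_Mapping.single w ?E))"
  proof (rule eqv_sum, rule eqv_sm)
    fix w assume "w \<in> Poly_Mapping.keys f"
    then have "set w \<subseteq> lieset" using assms unfolding wordsL_def by blast
    then show "eqv circ (psi y (foldl circ (tr (Leaf x)) w)) (Poly_Mapping.single w ?E)"
      using Cfold by blast
  qed
  moreover have "(\<Sum>w\<in>Poly_Mapping.keys f. sm (Poly_Mapping.lookup f w) (Poly_Mapping.single w ?E)) = sm ?E f"
  proof -
    have "sm ?E f = sm ?E (\<Sum>w\<in>Poly_Mapping.keys f. Poly_Mapping.single w (Poly_Mapping.lookup f w))"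
      using pm_expansion[of f] by simp
    also have "\<dots> = (\<Sum>w\<in>Poly_Mapping.keys f. sm (Poly_Mapping.lookup f w) (Poly_Mapping.single w ?E))"
      by (simp add: sm_sum sm_single mult.commute)
    finally show ?thesis by simp
  qed
  ultimately show ?thesis by simp
qed

end




lemma wordsL_zero: "0 \<in> wordsL"
  by (simp add: wordsL_def)

lemma wordsL_add: "p \<in> wordsL \<Longrightarrow> q \<in> wordsL \<Longrightarrow> p + q \<in> wordsL"
  unfolding wordsL_def using keys_add[of p q] by blast

lemma wordsL_sum: "(\<And>i. i \<in> A \<Longrightarrow> f i \<in> wordsL) \<Longrightarrow> sum f A \<in> wordsL"
  by (induction A rule: infinite_finite_induct) (auto simp: wordsL_zero wordsL_add)

lemma wordsL_single: "set w \<subseteq> lieset \<Longrightarrow> Poly_Mapping.single w c \<in> wordsL"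
  by (cases "c = 0") (auto simp: wordsL_def wordsL_zero)

theorem mainTheorem17:
  fixes circ :: "('x mag list \<Rightarrow>\<^sub>0 'k::field_char_0) \<Rightarrow> ('x mag list \<Rightarrow>\<^sub>0 'k) \<Rightarrow> ('x mag list \<Rightarrow>\<^sub>0 'k)"
  assumes "free_postlie circ"
  shows "(\<forall>m\<in>magset. \<exists>u. (\<forall>x. Poly_Mapping.lookup u x \<in> wordsL) \<and> canmap circ u = m)
       \<and> (\<forall>u. (\<forall>x. Poly_Mapping.lookup u x \<in> wordsL) \<longrightarrow>
              (canmap circ u = 0 \<longleftrightarrow> (\<forall>x. Poly_Mapping.lookup u x \<in> uideal circ)))"
proof -
  interpret pl circ by (rule pl.intro[OF assms])
  have surj: "\<exists>u. (\<forall>x. Poly_Mapping.lookup u x \<in> wordsL) \<and> canmap circ u = m" if m: "m \<in> magset" for m :: "'x mag list \<Rightarrow>\<^sub>0 'k"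
  proof -
    define u where "u = (\<Sum>w\<in>Poly_Mapping.keys m.
        Poly_Mapping.single (root (hd w)) (Poly_Mapping.single (trw (hd w) :: ('x mag list \<Rightarrow>\<^sub>0 'k) list) (Poly_Mapping.lookup m w)))"
    have "Poly_Mapping.lookup u x \<in> wordsL" for x
      unfolding u_def lookup_sum
      by (rule wordsL_sum) (auto simp: lookup_single when_def wordsL_zero intro!: wordsL_single trw_lie)
    moreover have "canmap circ u = m"
    proof -
      have "canmap circ u = (\<Sum>w\<in>Poly_Mapping.keys m.
          actF circ (tr (Leaf (root (hd w)))) (Poly_Mapping.single (trw (hd w)) (Poly_Mapping.lookup m w)))"
        unfolding u_def canmap_sum canmap_single ..
      also have "\<dots> = (\<Sum>w\<in>Poly_Mapping.keys m. Poly_Mapping.single w (Poly_Mapping.lookup m w))"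
      proof (rule sum.cong[OF refl])
        fix w assume w: "w \<in> Poly_Mapping.keys m"
        then have "length w = 1" using m unfolding magset_def by blast
        then obtain t where t: "w = [t]" by (cases w) auto
        show "actF circ (tr (Leaf (root (hd w)))) (Poly_Mapping.single (trw (hd w)) (Poly_Mapping.lookup m w))
            = Poly_Mapping.single w (Poly_Mapping.lookup m w)"
          using comb[of t] by (simp add: t actF_single tr_def sm_single)
      qed
      also have "\<dots> = m" using pm_expansion[of m] by simp
      finally show ?thesis .
    qed
    ultimately show ?thesis by blast
  qed
  have inj: "canmap circ u = 0 \<longleftrightarrow> (\<forall>x. Poly_Mapping.lookup u x \<in> uideal circ)"
    if u: "\<forall>x. Poly_Mapping.lookup u x \<in> wordsL" for u :: "'x \<Rightarrow>\<^sub>0 (('x mag list \<Rightarrow>\<^sub>0 'k) list \<Rightarrow>\<^sub>0 'k)"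
  proof
    assume z: "canmap circ u = 0"
    show "\<forall>x. Poly_Mapping.lookup u x \<in> uideal circ"
    proof
      fix y
      have "psi y (canmap circ u) = (\<Sum>x\<in>Poly_Mapping.keys u. psi y (actF circ (tr (Leaf x)) (Poly_Mapping.lookup u x)))"
        by (simp add: canmap_def psi_sum tr_def)
      moreover have "eqv circ (\<Sum>x\<in>Poly_Mapping.keys u. psi y (actF circ (tr (Leaf x)) (Poly_Mapping.lookup u x)))
          (\<Sum>x\<in>Poly_Mapping.keys u. sm (if x = y then 1 else 0) (Poly_Mapping.lookup u x))"
        by (rule eqv_sum) (rule psi_actF, use u in blast)
      moreover have "(\<Sum>x\<in>Poly_Mapping.keys u. sm (if x = y then 1 else 0) (Poly_Mapping.lookup u x)) = Poly_Mapping.lookup u y"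
      proof -
        have "(\<Sum>x\<in>Poly_Mapping.keys u. sm (if x = y then 1 else 0) (Poly_Mapping.lookup u x))
            = (\<Sum>x\<in>Poly_Mapping.keys u. if x = y then Poly_Mapping.lookup u x else 0)"
          by (rule sum.cong) auto
        also have "\<dots> = Poly_Mapping.lookup u y"
          by (simp add: sum.delta in_keys_iff)
        finally show ?thesis .
      qed
      ultimately have "eqv circ 0 (Poly_Mapping.lookup u y)" using z by simp
      then have "- Poly_Mapping.lookup u y \<in> uideal circ" unfolding eqv_def by simp
      then show "Poly_Mapping.lookup u y \<in> uideal circ" using uid_neg by fastforce
    qed
  next
    assume I: "\<forall>x. Poly_Mapping.lookup u x \<in> uideal circ"
    show "canmap circ u = 0"
      unfolding canmap_def using actF_ideal[OF _ lieset.gen] I by (simp add: sum.neutral)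
  qed
  show ?thesis using surj inj by blast
qed



end
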